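(* Let $p>2$, $M>1$, $s_0>M$, $\ell\in\left(p,\min\left\{\frac{(p-1)^2+p-2}{p-2},p^*\right\}\right)$, and for $q\ge p+1$ let $\mathcal N_q$ be as in the context. There exists $\sigma>0$ such that $$\inf_{q\ge p+1}\ \inf_{u\in\mathcal N_q}\|u\|_{L^\infty(B)}\ge\sigma.$$
   Context: $B$ is the open unit ball of $\mathbb R^N$; $p^*=Np/(N-p)$ if $p<N$, $+\infty$ otherwise. $\mathcal C:=\{u\in W^{1,p}_{\mathrm{rad}}(B): u\ge0,\ u(r)\le u(s)\ \text{for }0<r\le s\le1\}$ (radial functions as functions of $r=|x|$). For $q\ge p+1$: $\tilde f_q(s)=s^{q-1}$ on $[0,s_0]$, $\tilde f_q(s)=s_0^{q-1}+\frac{q-1}{\ell-1}s_0^{q-\ell}(s^{\ell-1}-s_0^{\ell-1})$ for $s>s_0$, $\tilde f_q=0$ on $(-\infty,0)$; $\mathcal N_q:=\{u\in\mathcal C\setminus\{0\}: \int_B(|\nabla u|^p+|u|^p)dx=\int_B\tilde f_q(u)u\,dx\}$. *)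

theory Defs
  imports "HOL-Analysis.Analysis" "HOL-Probability.Essential_Supremum"
begin

text \<open>Unit ball of the Euclidean space 'a, N = DIM('a).\<close>
abbreviation unit_ball :: "'a::euclidean_space set" where
  "unit_ball \<equiv> ball 0 1"

definition sobolev_crit :: "nat \<Rightarrow> real \<Rightarrow> ereal" where
  "sobolev_crit N p = (if p < real N then ereal (real N * p / (real N - p)) else \<infinity>)"

definition test_fun :: "'a::euclidean_space set \<Rightarrow> ('a \<Rightarrow> real) \<Rightarrow> ('a \<Rightarrow> 'a) \<Rightarrow> bool" where
  "test_fun U \<phi> d\<phi> \<longleftrightarrow>
     (\<forall>x. (\<phi> has_derivative (\<lambda>h. d\<phi> x \<bullet> h)) (at x)) \<and> continuous_on UNIV d\<phi> \<and>
     compact (closure {x. \<phi> x \<noteq> 0}) \<and> closure {x. \<phi> x \<noteq> 0} \<subseteq> U"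

definition weak_gradient :: "'a::euclidean_space set \<Rightarrow> ('a \<Rightarrow> real) \<Rightarrow> ('a \<Rightarrow> 'a) \<Rightarrow> bool" where
  "weak_gradient U u g \<longleftrightarrow>
     (\<forall>\<phi> d\<phi>. test_fun U \<phi> d\<phi> \<longrightarrow>
        (LINT x:U|lebesgue. u x *\<^sub>R d\<phi> x) = - (LINT x:U|lebesgue. \<phi> x *\<^sub>R g x))"

definition in_Lp :: "real \<Rightarrow> 'a::euclidean_space set \<Rightarrow> ('a \<Rightarrow> 'b::euclidean_space) \<Rightarrow> bool" where
  "in_Lp p U u \<longleftrightarrow> u \<in> borel_measurable (lebesgue_on U) \<and>
                     set_integrable lebesgue U (\<lambda>x. norm (u x) powr p)"

definition sobolev_grad :: "real \<Rightarrow> 'a::euclidean_space set \<Rightarrow> ('a \<Rightarrow> real) \<Rightarrow> ('a \<Rightarrow> 'a) \<Rightarrow> bool" where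
  "sobolev_grad p U u g \<longleftrightarrow> in_Lp p U u \<and> in_Lp p U g \<and> weak_gradient U u g"

text \<open>The cone C: nonnegative radial W^{1,p}(B) functions, nondecreasing in r = |x|
  (stated for a pointwise representative).\<close>
definition cone_C :: "real \<Rightarrow> ('a::euclidean_space \<Rightarrow> real) set" where
  "cone_C p = {u. (\<exists>g. sobolev_grad p unit_ball u g) \<and>
      (\<forall>x\<in>unit_ball. \<forall>y\<in>unit_ball. norm x = norm y \<longrightarrow> u x = u y) \<and>
      (\<forall>x\<in>unit_ball. u x \<ge> 0) \<and>
      (\<forall>x\<in>unit_ball. \<forall>y\<in>unit_ball. 0 < norm x \<and> norm x \<le> norm y \<longrightarrow> u x \<le> u y)}"

definition f_tilde :: "real \<Rightarrow> real \<Rightarrow> real \<Rightarrow> real \<Rightarrow> real" where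
  "f_tilde s0 l q s =
     (if s < 0 then 0
      else if s \<le> s0 then s powr (q - 1)
      else s0 powr (q - 1) + (q - 1) / (l - 1) * s0 powr (q - l) * (s powr (l - 1) - s0 powr (l - 1)))"

text \<open>Nehari-type set N_q (u nonzero as an element of W^{1,p}, i.e. not a.e. zero;
  the gradient in the Nehari identity is the weak gradient).\<close>
definition nehari :: "real \<Rightarrow> real \<Rightarrow> real \<Rightarrow> real \<Rightarrow> ('a::euclidean_space \<Rightarrow> real) set" where
  "nehari p s0 l q = {u \<in> cone_C p. \<not> (AE x in lebesgue_on unit_ball. u x = 0) \<and>
      (\<exists>g. sobolev_grad p unit_ball u g \<and>
        (LINT x:unit_ball|lebesgue. norm (g x) powr p + \<bar>u x\<bar> powr p)
          = (LINT x:unit_ball|lebesgue. f_tilde s0 l q (u x) * u x))}"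

definition Linf_norm :: "('a::euclidean_space \<Rightarrow> real) \<Rightarrow> ereal" where
  "Linf_norm u = esssup (lebesgue_on unit_ball) (\<lambda>x. ereal \<bar>u x\<bar>)"

end

theory Submission
  imports Defs
begin

lemma lint_conv:
  fixes f :: "'a::euclidean_space \<Rightarrow> real"
  shows "(LINT x:unit_ball|lebesgue. f x) = integral\<^sup>L (lebesgue_on unit_ball) f"
  by (simp add: set_lebesgue_integral_def integral_restrict_space)

lemma sint_conv:
  fixes f :: "'a::euclidean_space \<Rightarrow> real"
  shows "set_integrable lebesgue unit_ball f = integrable (lebesgue_on unit_ball) f"
  by (simp add: set_integrable_def integrable_restrict_space)

lemma key:
  fixes u :: "'a::euclidean_space \<Rightarrow> real"
  assumes p: "p > 2" and s0: "s0 > 1" and q: "q \<ge> p + 1"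
    and u: "u \<in> nehari p s0 l q"
  shows "Linf_norm u \<ge> 1"
proof (rule ccontr)
  assume "\<not> Linf_norm u \<ge> 1"
  hence L1: "Linf_norm u < 1" by simp
  define N where "N = lebesgue_on (unit_ball :: 'a set)"
  from u obtain g where C: "u \<in> cone_C p" and nz: "\<not> (AE x in N. u x = 0)"
    and sg: "sobolev_grad p unit_ball u g"
    and eq: "(LINT x:unit_ball|lebesgue. norm (g x) powr p + \<bar>u x\<bar> powr p)
          = (LINT x:unit_ball|lebesgue. f_tilde s0 l q (u x) * u x)"
    unfolding nehari_def N_def by blast
  have nn: "\<forall>x\<in>unit_ball. u x \<ge> 0" using C unfolding cone_C_def by blast
  have umeas: "u \<in> borel_measurable N" and uint: "integrable N (\<lambda>x. norm (u x) powr p)"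
    and gint: "integrable N (\<lambda>x. norm (g x) powr p)"
    using sg unfolding sobolev_grad_def in_Lp_def N_def sint_conv by auto
  define m where "m = max 0 (real_of_ereal (Linf_norm u))"
  have m0: "0 \<le> m" and m1: "m < 1" using L1 unfolding m_def
    by (cases "Linf_norm u"; auto)+
  have AEL: "AE x in N. ereal \<bar>u x\<bar> \<le> Linf_norm u"
    unfolding Linf_norm_def N_def by (rule esssup_AE)
  have AEsp: "AE x in N. x \<in> unit_ball"
    unfolding N_def by (rule AE_I2) (simp add: space_restrict_space)
  have AEm: "AE x in N. 0 \<le> u x \<and> u x \<le> m"
    using AEL AEsp
  proof eventually_elim
    case (elim x)
    then show ?case using nn m_def L1 by (cases "Linf_norm u") auto
  qed
  have ptw: "f_tilde s0 l q (u x) * u x \<le> m powr (q - p) * norm (u x) powr p"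
    if "0 \<le> u x" "u x \<le> m" for x
  proof -
    have "u x \<le> s0" using that m1 s0 by simp
    hence "f_tilde s0 l q (u x) * u x = u x powr (q - 1) * u x powr 1"
      using that by (simp add: f_tilde_def)
    also have "\<dots> = u x powr ((q - 1) + 1)" by (rule powr_add[symmetric])
    also have "\<dots> = u x powr ((q - p) + p)" by simp
    also have "\<dots> = u x powr (q - p) * u x powr p" by (rule powr_add)
    also have "\<dots> \<le> m powr (q - p) * u x powr p"
      using that q p by (intro mult_right_mono powr_mono2) auto
    finally show ?thesis using that by simp
  qed
  have i1: "integral\<^sup>L N (\<lambda>x. f_tilde s0 l q (u x) * u x)
       \<le> integral\<^sup>L N (\<lambda>x. m powr (q - p) * norm (u x) powr p)"
    by (rule integral_mono_AE') (use uint AEm ptw in auto)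
  have i2: "integral\<^sup>L N (\<lambda>x. norm (u x) powr p)
       \<le> integral\<^sup>L N (\<lambda>x. norm (g x) powr p + \<bar>u x\<bar> powr p)"
    by (rule integral_mono) (use uint gint in auto)
  have eq': "integral\<^sup>L N (\<lambda>x. norm (g x) powr p + \<bar>u x\<bar> powr p)
       = integral\<^sup>L N (\<lambda>x. f_tilde s0 l q (u x) * u x)"
    using eq unfolding lint_conv N_def .
  define I where "I = integral\<^sup>L N (\<lambda>x. norm (u x) powr p)"
  have I0: "I \<ge> 0" unfolding I_def by simp
  have "I \<le> m powr (q - p) * I" using i1 i2 eq' unfolding I_def by simp
  moreover have "m powr (q - p) < 1"
    using powr_less_mono2[of "q - p" m 1] m0 m1 q p by simp
  ultimately have "I = 0" using I0
  proof -
    assume a: "I \<le> m powr (q - p) * I" "m powr (q - p) < 1" "0 \<le> I"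
    show "I = 0"
    proof (rule ccontr)
      assume "I \<noteq> 0"
      hence "0 < I" using a by simp
      hence "m powr (q - p) * I < 1 * I" using a(2) by (rule mult_strict_right_mono[rotated])
      thus False using a(1) by simp
    qed
  qed
  hence "AE x in N. norm (u x) powr p = 0"
    using integral_nonneg_eq_0_iff_AE[OF uint] unfolding I_def by simp
  hence "AE x in N. u x = 0" by eventually_elim (use p in simp)
  with nz show False by blast
qed

theorem lemma5p2:
  fixes p M s0 l :: real
  assumes "p > 2" and "M > 1" and "s0 > M"
    and "l > p"
    and "l < ((p - 1)\<^sup>2 + p - 2) / (p - 2)"
    and "ereal l < sobolev_crit DIM('a::euclidean_space) p"
  shows "\<exists>\<sigma>>0. (INF q\<in>{p + 1..}. INF u\<in>(nehari p s0 l q :: ('a \<Rightarrow> real) set). Linf_norm u) \<ge> ereal \<sigma>"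
proof (intro exI conjI)
  show "(0::real) < 1" by simp
  show "(INF q\<in>{p + 1..}. INF u\<in>(nehari p s0 l q :: ('a \<Rightarrow> real) set). Linf_norm u) \<ge> ereal 1"
    using assms key[of p s0] by (auto intro!: INF_greatest simp: one_ereal_def[symmetric])
qed

end
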